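(* Let $n\ge1$, $\omega,\varphi\in\mathbb{R}^n$, $\mathbf{a}\in\mathbb{R}^{n\times n}$ with rows $a_1,\dots,a_n\in\mathbb{R}^n$ (entries $a_{ij}$), $b,c\in\mathbb{R}^n$, $d\in\mathbb{R}$, and let $$f(x)=\sum_{i=1}^n c_i\sin\Big(\sum_{j=1}^n a_{ij}\sin(\omega_jx+\varphi_j)+b_i\Big)+d.$$ For $\mathbf{k}\in\mathbb{Z}^n$, $u\in\mathbb{R}^n$ and $\beta\in\mathbb{R}$ put $\alpha_{\mathbf{k}}(u)=\prod_{j=1}^nJ_{k_j}(u_j)$, $A_{\mathbf{k}}(u,\beta)=\alpha_{\mathbf{k}}(u)\sin(\langle\mathbf{k},\varphi\rangle+\beta)$, $B_{\mathbf{k}}(u,\beta)=\alpha_{\mathbf{k}}(u)\cos(\langle\mathbf{k},\varphi\rangle+\beta)$, and let $A_{\mathbf{k}}=(A_{\mathbf{k}}(a_1,b_1),\dots,A_{\mathbf{k}}(a_n,b_n))$, $B_{\mathbf{k}}=(B_{\mathbf{k}}(a_1,b_1),\dots,B_{\mathbf{k}}(a_n,b_n))$. Then for all $x\in\mathbb{R}$, $$f(x)=\sum_{\mathbf{k}\in\mathbb{Z}^n}\langle c,A_{\mathbf{k}}\rangle\cos\big(\langle\mathbf{k},\omega\rangle x\big)+\langle c,B_{\mathbf{k}}\rangle\sin\big(\langle\mathbf{k},\omega\rangle x\big)+d.$$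
   Context: $J_k$ is the Bessel function of the first kind of integer order $k$; $\langle\cdot,\cdot\rangle$ is the standard inner product on $\mathbb{R}^n$ (so $\langle\mathbf{k},\omega\rangle=\sum_jk_j\omega_j$). The function $f$ is a sinusoidal network with one hidden layer of width $n$: first layer $x\mapsto\sin(\omega x+\varphi)$, hidden layer $y\mapsto\sin(\mathbf{a}y+b)$, linear output $z\mapsto\langle c,z\rangle+d$. *)

theory Defs
  imports "HOL-Analysis.Analysis"
begin

definition bessel_J_nat :: "nat \<Rightarrow> real \<Rightarrow> real" where
  "bessel_J_nat n x = (\<Sum>m. (-1) ^ m / (fact m * fact (m + n)) * (x / 2) ^ (2 * m + n))"

definition bessel_J :: "int \<Rightarrow> real \<Rightarrow> real" where
  "bessel_J k x = (if 0 \<le> k then bessel_J_nat (nat k) x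
                   else (-1) ^ nat (- k) * bessel_J_nat (nat (- k)) x)"

definition int_inner :: "int ^ 'n \<Rightarrow> real ^ 'n \<Rightarrow> real" where
  "int_inner k v = (\<Sum>j\<in>UNIV. of_int (k $ j) * v $ j)"

definition sin_net ::
  "real ^ 'n \<Rightarrow> real ^ 'n \<Rightarrow> real ^ 'n ^ 'n \<Rightarrow> real ^ 'n \<Rightarrow> real ^ 'n \<Rightarrow> real \<Rightarrow> real \<Rightarrow> real" where
  "sin_net \<omega> \<phi> a b c d x =
     (\<Sum>i\<in>UNIV. c $ i * sin ((\<Sum>j\<in>UNIV. a $ i $ j * sin (\<omega> $ j * x + \<phi> $ j)) + b $ i)) + d"

definition alpha_k :: "int ^ 'n \<Rightarrow> real ^ 'n \<Rightarrow> real" where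
  "alpha_k k u = (\<Prod>j\<in>UNIV. bessel_J (k $ j) (u $ j))"

definition A_k :: "real ^ 'n \<Rightarrow> int ^ 'n \<Rightarrow> real ^ 'n \<Rightarrow> real \<Rightarrow> real" where
  "A_k \<phi> k u \<beta> = alpha_k k u * sin (int_inner k \<phi> + \<beta>)"

definition B_k :: "real ^ 'n \<Rightarrow> int ^ 'n \<Rightarrow> real ^ 'n \<Rightarrow> real \<Rightarrow> real" where
  "B_k \<phi> k u \<beta> = alpha_k k u * cos (int_inner k \<phi> + \<beta>)"

definition A_vec :: "real ^ 'n \<Rightarrow> real ^ 'n ^ 'n \<Rightarrow> real ^ 'n \<Rightarrow> int ^ 'n \<Rightarrow> real ^ 'n" where
  "A_vec \<phi> a b k = (\<chi> i. A_k \<phi> k (a $ i) (b $ i))"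

definition B_vec :: "real ^ 'n \<Rightarrow> real ^ 'n ^ 'n \<Rightarrow> real ^ 'n \<Rightarrow> int ^ 'n \<Rightarrow> real ^ 'n" where
  "B_vec \<phi> a b k = (\<chi> i. B_k \<phi> k (a $ i) (b $ i))"

end

theory Submission
  imports Defs
begin


lemma has_sum_finsum:
  fixes f :: "'i \<Rightarrow> 'a \<Rightarrow> 'b::{topological_comm_monoid_add, t2_space}"
  assumes "finite I" "\<And>i. i \<in> I \<Longrightarrow> (f i has_sum s i) A"
  shows "((\<lambda>x. \<Sum>i\<in>I. f i x) has_sum (\<Sum>i\<in>I. s i)) A"
  using assms
proof (induction I rule: finite_induct)
  case empty then show ?case by simp
next
  case (insert i I)
  then show ?case by (simp add: has_sum_add)
qed

lemma prod_has_sum: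
  fixes f :: "'n::finite \<Rightarrow> int \<Rightarrow> complex"
  assumes ab: "\<And>j. Infinite_Sum.abs_summable_on (f j) UNIV"
  shows "((\<lambda>k::int^'n. \<Prod>j\<in>UNIV. f j (k $ j)) has_sum (\<Prod>j\<in>UNIV. infsum (f j) UNIV)) UNIV"
proof -
  let ?G = "\<lambda>g::'n \<Rightarrow> int. \<Prod>j\<in>UNIV. f j (g j)"
  have P: "PiE UNIV (\<lambda>_. UNIV) = (UNIV :: ('n \<Rightarrow> int) set)" by auto
  have "Infinite_Set_Sum.abs_summable_on ?G (PiE UNIV (\<lambda>_. UNIV))"
    by (rule abs_summable_on_prod_PiE) (auto simp: abs_summable_equivalent[symmetric] ab)
  hence "Infinite_Sum.abs_summable_on ?G UNIV" using P abs_summable_equivalent by metis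
  hence s: "?G summable_on UNIV" by (rule abs_summable_summable)
  have "infsum ?G (PiE UNIV (\<lambda>_. UNIV)) = (\<Prod>j\<in>UNIV. infsum (f j) UNIV)"
    by (rule infsum_prod_PiE_abs) (auto simp: ab)
  with s P have h: "(?G has_sum (\<Prod>j\<in>UNIV. infsum (f j) UNIV)) UNIV"
    by (metis has_sum_infsum)
  have b: "bij_betw vec_nth (UNIV :: (int^'n) set) UNIV"
    by (rule bij_betwI[where g=vec_lambda]) auto
  show ?thesis using has_sum_reindex_bij_betw[OF b, of ?G] h by simp
qed



definition bT :: "nat \<Rightarrow> real \<Rightarrow> nat \<Rightarrow> real" where
  "bT n u m = (-1) ^ m / (fact m * fact (m + n)) * (u / 2) ^ (2 * m + n)"

lemma dv: "a*b/f = a*(inverse f * b)" for a b f :: real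
  by (simp add: divide_inverse)

lemma pw: "(x::real)^(2*m+n) = x^n * (x^2)^m"
  by (metis power_add power_mult mult.commute)

lemma bT_bound: "\<bar>bT n u m\<bar> \<le> (\<bar>u\<bar>/2)^n * (inverse (fact m) * ((u/2)^2)^m)"
proof -
  have a1: "\<bar>bT n u m\<bar> = \<bar>u/2\<bar>^(2*m+n) / (fact m * fact (m + n))"
    by (simp add: bT_def abs_mult power_abs)
  have a2: "\<bar>u/2\<bar>^(2*m+n) = (\<bar>u\<bar>/2)^n * ((u/2)^2)^m"
  proof -
    have "\<bar>u/2\<bar>^(2*m+n) = \<bar>u/2\<bar>^n * (\<bar>u/2\<bar>^2)^m"
      by (rule pw)
    also have "\<bar>u/2\<bar>^2 = (u/2)^2" by (rule power2_abs)
    finally show ?thesis by simp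
  qed
  have e: "\<bar>bT n u m\<bar> = (\<bar>u\<bar>/2)^n * ((u/2)^2)^m / (fact m * fact (m + n))"
    by (simp only: a1 a2)
  have "(\<bar>u\<bar>/2)^n * ((u/2)^2)^m / (fact m * fact (m + n)) \<le> (\<bar>u\<bar>/2)^n * ((u/2)^2)^m / (fact m)"
    by (rule divide_left_mono) (auto simp: fact_ge_1)
  also have "(\<bar>u\<bar>/2)^n * ((u/2)^2)^m / (fact m) = (\<bar>u\<bar>/2)^n * (inverse (fact m) * ((u/2)^2)^m)"
    by (rule dv)
  finally show ?thesis unfolding e .
qed

lemma bT_summable: "summable (\<lambda>m. norm (bT n u m))"
proof (rule summable_comparison_test)
  show "\<exists>N. \<forall>m\<ge>N. norm (norm (bT n u m)) \<le> (\<bar>u\<bar>/2)^n * (inverse (fact m) * ((u/2)^2)^m)"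
    using bT_bound by auto
  show "summable (\<lambda>m. (\<bar>u\<bar>/2)^n * (inverse (fact m) * ((u/2)^2)^m))"
    by (rule summable_mult[OF summable_exp])
qed

lemma bT_has_sum: "((\<lambda>m. bT n u m) has_sum bessel_J_nat n u) UNIV"
proof -
  have "summable (bT n u)" using bT_summable summable_norm_cancel by blast
  hence "bT n u sums bessel_J_nat n u" unfolding bessel_J_nat_def bT_def[abs_def]
    by (simp add: summable_sums)
  thus ?thesis by (intro norm_summable_imp_has_sum bT_summable)
qed

lemma exp_has_sum: "((\<lambda>n. z^n /\<^sub>R fact n) has_sum exp z) UNIV"
  by (intro norm_summable_imp_has_sum summable_norm_exp exp_converges)

lemma exp_abs_summable: "Infinite_Sum.abs_summable_on (\<lambda>n. (z::complex)^n /\<^sub>R fact n) UNIV"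
  using norm_summable_imp_summable_on[of "\<lambda>n. norm (z^n /\<^sub>R fact n)"] summable_norm_exp[of z]
  by simp



lemma cis_combo1: "cis t ^ (m+n) * cis (-t) ^ m = cis t ^ n"
proof -
  have "cis t ^ (m+n) * cis (-t) ^ m = cis t ^ n * (cis t * cis (-t)) ^ m"
    by (simp add: power_add power_mult_distrib)
  also have "cis t * cis (-t) = 1" by (simp add: cis_mult)
  finally show ?thesis by simp
qed

lemma cis_combo2: "cis t ^ m * cis (-t) ^ (m+n) = cis (-t) ^ n"
  using cis_combo1[of "-t" m n] by (simp add: mult.commute)

lemma e_form0: "(of_real c * w) ^ p /\<^sub>R F = complex_of_real (c ^ p / F) * w ^ p"
  by (simp add: scaleR_conv_of_real power_mult_distrib divide_inverse)

lemma gen1: "(A::real) / F1 * ((s * B) / F2) = s / (F2*F1) * (A*B)"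
  by (simp add: divide_inverse mult_ac)
lemma gen2: "(A::real) / F1 * ((t * (s * B)) / F2) = t * (s / (F1*F2) * (A*B))"
  by (simp add: divide_inverse mult_ac)
lemma rc1: "(a::real) ^ (m+n) / F1 * ((-a) ^ m / F2) = (-1)^m / (F2 * F1) * a ^ (2*m+n)"
proof -
  have 1: "a^(m+n)*a^m = a^(2*m+n)"
    by (metis power_add add.commute mult_2 add.assoc)
  have 2: "(-a)^m = (-1)^m * a^m" by (rule power_minus)
  show ?thesis unfolding 2 1[symmetric] by (rule gen1)
qed
lemma rc2: "(a::real) ^ m / F1 * ((-a) ^ (m+n) / F2) = (-1)^n * ((-1)^m / (F1 * F2) * a ^ (2*m+n))"
proof -
  have 1: "a^m*a^(m+n) = a^(2*m+n)"
    by (metis power_add add.commute mult_2 add.assoc)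
  have 2: "(-a)^(m+n) = (-1)^n * ((-1)^m * a^(m+n))" 
    by (metis power_minus power_add mult.commute mult.left_commute)
  show ?thesis unfolding 2 1[symmetric] by (rule gen2)
qed

lemma gen3: "(complex_of_real a * w) * (complex_of_real b * z) = complex_of_real (a * b) * (w * z)"
  by (simp add: mult_ac)

lemma fib1:
  fixes u t :: real
  defines "X \<equiv> complex_of_real (u/2) * cis t"
  defines "Y \<equiv> complex_of_real (-(u/2)) * cis (-t)"
  shows "X ^ (m+n) /\<^sub>R fact (m+n) * (Y ^ m /\<^sub>R fact m) = complex_of_real (bT n u m) * cis (real n * t)"
proof -
  have "X ^ (m+n) /\<^sub>R fact (m+n) * (Y ^ m /\<^sub>R fact m)
      = complex_of_real ((u/2) ^ (m+n) / fact (m+n) * ((-(u/2)) ^ m / fact m)) * (cis t ^ (m+n) * cis (-t) ^ m)"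
    unfolding X_def Y_def e_form0 gen3 ..
  also have "\<dots> = complex_of_real (bT n u m) * cis (real n * t)"
  proof -
    have r: "(u/2) ^ (m+n) / fact (m+n) * ((-(u/2)) ^ m / fact m) = bT n u m"
      unfolding rc1 bT_def ..
    have c: "cis t ^ (m+n) * cis (-t) ^ m = cis (real n * t)"
      unfolding cis_combo1 by (rule Complex.DeMoivre)
    show ?thesis by (simp only: r c)
  qed
  finally show ?thesis .
qed

lemma fib2:
  fixes u t :: real
  defines "X \<equiv> complex_of_real (u/2) * cis t"
  defines "Y \<equiv> complex_of_real (-(u/2)) * cis (-t)"
  shows "X ^ m /\<^sub>R fact m * (Y ^ (m+n) /\<^sub>R fact (m+n)) = complex_of_real ((-1)^n * bT n u m) * cis (real n * (- t))"
proof -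
  have "X ^ m /\<^sub>R fact m * (Y ^ (m+n) /\<^sub>R fact (m+n))
      = complex_of_real ((u/2) ^ m / fact m * ((-(u/2)) ^ (m+n) / fact (m+n))) * (cis t ^ m * cis (-t) ^ (m+n))"
    unfolding X_def Y_def e_form0 gen3 ..
  also have "\<dots> = complex_of_real ((-1)^n * bT n u m) * cis (real n * (- t))"
  proof -
    have r: "(u/2) ^ m / fact m * ((-(u/2)) ^ (m+n) / fact (m+n)) = (-1)^n * bT n u m"
      unfolding rc2 bT_def ..
    have c: "cis t ^ m * cis (-t) ^ (m+n) = cis (real n * (-t))"
      unfolding cis_combo2 by (rule Complex.DeMoivre)
    show ?thesis by (simp only: r c)
  qed
  finally show ?thesis .
qed



lemma jacobi_anger:
  fixes u t :: real
  shows "((\<lambda>k::int. complex_of_real (bessel_J k u) * cis (of_int k * t)) has_sum cis (u * sin t)) UNIV"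
    and "Infinite_Sum.abs_summable_on (\<lambda>k::int. complex_of_real (bessel_J k u) * cis (of_int k * t)) UNIV"
proof -
  define X where "X = complex_of_real (u/2) * cis t"
  define Y where "Y = complex_of_real (-(u/2)) * cis (-t)"
  define e where "e z n = z ^ n /\<^sub>R fact n" for z :: complex and n :: nat
  define F where "F = (\<lambda>(p,q). e X p * e Y q)"
  define G where "G = (\<lambda>k::int. complex_of_real (bessel_J k u) * cis (of_int k * t))"
  have eh: "(e z has_sum exp z) UNIV" for z unfolding e_def by (rule exp_has_sum)
  have ea: "Infinite_Set_Sum.abs_summable_on (e z) UNIV" for z
    using exp_abs_summable[of z] abs_summable_equivalent unfolding e_def by blast
  have "Infinite_Set_Sum.abs_summable_on F (UNIV \<times> UNIV)"
    unfolding F_def by (rule abs_summable_on_product) (auto intro: ea)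
  hence Fabs: "Infinite_Sum.abs_summable_on F UNIV"
    using abs_summable_equivalent by (metis UNIV_Times_UNIV)
  have Fsum: "(F has_sum exp X * exp Y) UNIV"
  proof -
    have "(F has_sum exp X * exp Y) (Sigma UNIV (\<lambda>_. UNIV))"
    proof (rule has_sum_SigmaI[where g = "\<lambda>p. e X p * exp Y"])
      show "((\<lambda>q. F (p, q)) has_sum e X p * exp Y) UNIV" for p
        unfolding F_def by (simp add: has_sum_cmult_right eh)
      show "((\<lambda>p. e X p * exp Y) has_sum exp X * exp Y) UNIV"
        by (rule has_sum_cmult_left[OF eh])
      show "F summable_on Sigma UNIV (\<lambda>_. UNIV)"
        using abs_summable_summable[OF Fabs] by simp
    qed
    thus ?thesis by simp
  qed
  define \<phi> where "\<phi> = (\<lambda>(k::int, m::nat). if 0 \<le> k then (m + nat k, m) else (m, m + nat (-k)))"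
  define \<psi> where "\<psi> = (\<lambda>(p::nat, q::nat). (int p - int q, min p q))"
  have reidx: "((\<lambda>x. F (\<phi> x)) has_sum s) UNIV \<longleftrightarrow> (F has_sum s) UNIV" for s
    by (rule has_sum_reindex_bij_witness[of UNIV \<psi> \<phi> UNIV F])
       (auto simp: \<phi>_def \<psi>_def split: if_splits)
  have Fphi: "((\<lambda>x. F (\<phi> x)) has_sum exp X * exp Y) (Sigma UNIV (\<lambda>_. UNIV))"
    using reidx Fsum by simp
  have fib: "((\<lambda>m. F (\<phi> (k, m))) has_sum G k) UNIV" for k
  proof (cases "0 \<le> k")
    case True
    define n where "n = nat k"
    have k: "k = int n" using True n_def by simp
    have "F (\<phi> (k, m)) = complex_of_real (bT n u m) * cis (real n * t)" for m
    proof -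
      have "F (\<phi> (k, m)) = e X (m+n) * e Y m" using True by (simp add: F_def \<phi>_def n_def)
      also have "\<dots> = complex_of_real (bT n u m) * cis (real n * t)"
        unfolding e_def X_def Y_def by (rule fib1)
      finally show ?thesis .
    qed
    moreover have "((\<lambda>m. complex_of_real (bT n u m) * cis (real n * t)) has_sum G k) UNIV"
    proof -
      have "G k = complex_of_real (bessel_J_nat n u) * cis (real n * t)"
        unfolding G_def k bessel_J_def by simp
      thus ?thesis by (simp only:) (intro has_sum_cmult_left has_sum_of_real bT_has_sum)
    qed
    ultimately show ?thesis by simp
  next
    case False
    define n where "n = nat (-k)"
    have k: "k = - int n" using False n_def by simp
    have "F (\<phi> (k, m)) = complex_of_real ((-1)^n * bT n u m) * cis (real n * (-t))" for m
    proof -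
      have "F (\<phi> (k, m)) = e X m * e Y (m+n)" using False by (simp add: F_def \<phi>_def n_def)
      also have "\<dots> = complex_of_real ((-1)^n * bT n u m) * cis (real n * (-t))"
        unfolding e_def X_def Y_def by (rule fib2)
      finally show ?thesis .
    qed
    moreover have "((\<lambda>m. complex_of_real ((-1)^n * bT n u m) * cis (real n * (-t))) has_sum G k) UNIV"
    proof -
      have "((\<lambda>m. complex_of_real ((-1)^n * bT n u m) * cis (real n * (-t))) has_sum
             complex_of_real ((-1)^n * bessel_J_nat n u) * cis (real n * (-t))) UNIV"
        by (intro has_sum_cmult_left has_sum_of_real has_sum_cmult_right bT_has_sum)
      moreover have "G k = complex_of_real ((-1)^n * bessel_J_nat n u) * cis (real n * (-t))"
        unfolding G_def k bessel_J_def using False k by simp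
      ultimately show ?thesis by simp
    qed
    ultimately show ?thesis by simp
  qed
  have Gsum: "(G has_sum exp X * exp Y) UNIV"
    by (rule has_sum_SigmaD[OF Fphi]) (use fib in auto)
  have XY: "X + Y = \<i> * complex_of_real (u * sin t)"
    unfolding X_def Y_def by (simp add: complex_eq_iff cis.sel)
  have "exp X * exp Y = cis (u * sin t)"
    by (simp add: exp_add[symmetric] XY cis_conv_exp)
  with Gsum show "(G has_sum cis (u * sin t)) UNIV" by simp
  have "Infinite_Sum.abs_summable_on (\<lambda>x. F (\<phi> x)) UNIV \<longleftrightarrow> Infinite_Sum.abs_summable_on F UNIV"
    by (rule summable_on_reindex_bij_witness[of UNIV \<psi> \<phi> UNIV "\<lambda>x. norm (F x)"])
       (auto simp: \<phi>_def \<psi>_def split: if_splits)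
  with Fabs have FPabs: "Infinite_Sum.abs_summable_on (\<lambda>x. F (\<phi> x)) (Sigma UNIV (\<lambda>_. UNIV))"
    by simp
  note sig = Infinite_Sum.abs_summable_on_Sigma_iff[where f="\<lambda>x. F (\<phi> x)" and A=UNIV and B="\<lambda>_. UNIV", THEN iffD1, OF FPabs]
  have fa: "Infinite_Sum.abs_summable_on (\<lambda>m. F (\<phi> (k, m))) UNIV"
    and ga: "Infinite_Sum.abs_summable_on (\<lambda>k. infsum (\<lambda>m. norm (F (\<phi> (k, m)))) UNIV) UNIV" for k
    using sig by auto
  show "Infinite_Sum.abs_summable_on G UNIV"
  proof (rule Infinite_Sum.abs_summable_on_comparison_test[OF ga])
    fix k :: int
    have "G k = infsum (\<lambda>m. F (\<phi> (k, m))) UNIV" using fib[of k] by (simp add: infsumI)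
    hence "norm (G k) \<le> infsum (\<lambda>m. norm (F (\<phi> (k, m)))) UNIV"
      using norm_infsum_bound[OF fa[of k]] by simp
    thus "norm (G k) \<le> norm (infsum (\<lambda>m. norm (F (\<phi> (k, m)))) UNIV)" by simp
  qed
qed



lemma prod_cis: "finite A \<Longrightarrow> (\<Prod>j\<in>A. cis (f j)) = cis (\<Sum>j\<in>A. f j)"
  by (induction A rule: finite_induct) (auto simp: cis_mult)

lemma row_expansion:
  fixes \<omega> \<phi> r :: "real ^ 'n" and x \<beta> :: real
  shows "((\<lambda>k::int^'n. alpha_k k r * sin (int_inner k \<omega> * x + (int_inner k \<phi> + \<beta>)))
          has_sum sin ((\<Sum>j\<in>UNIV. r $ j * sin (\<omega> $ j * x + \<phi> $ j)) + \<beta>)) UNIV"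
proof -
  define \<theta> where "\<theta> j = \<omega> $ j * x + \<phi> $ j" for j
  define f where "f j k = complex_of_real (bessel_J k (r $ j)) * cis (of_int k * \<theta> j)" for j k
  have ab: "Infinite_Sum.abs_summable_on (f j) UNIV" for j
    unfolding f_def by (rule jacobi_anger(2))
  have inf: "infsum (f j) UNIV = cis (r $ j * sin (\<theta> j))" for j
    unfolding f_def by (rule infsumI, rule jacobi_anger(1))
  have h1: "((\<lambda>k::int^'n. \<Prod>j\<in>UNIV. f j (k $ j)) has_sum (\<Prod>j\<in>UNIV. cis (r $ j * sin (\<theta> j)))) UNIV"
    using prod_has_sum[of f, OF ab] unfolding inf .
  have e1: "(\<Prod>j\<in>UNIV. f j (k $ j)) = complex_of_real (alpha_k k r) * cis (int_inner k \<omega> * x + int_inner k \<phi>)"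
    for k :: "int^'n"
  proof -
    have "(\<Prod>j\<in>UNIV. f j (k $ j)) = complex_of_real (alpha_k k r) * (\<Prod>j\<in>UNIV. cis (of_int (k $ j) * \<theta> j))"
      unfolding f_def alpha_k_def by (simp only: prod.distrib of_real_prod)
    also have "(\<Prod>j\<in>UNIV. cis (of_int (k $ j) * \<theta> j)) = cis (\<Sum>j\<in>UNIV. of_int (k $ j) * \<theta> j)"
      by (simp add: prod_cis)
    also have "(\<Sum>j\<in>UNIV. of_int (k $ j) * \<theta> j) = int_inner k \<omega> * x + int_inner k \<phi>"
      unfolding \<theta>_def int_inner_def by (simp only: distrib_left sum.distrib sum_distrib_right mult.assoc)
    finally show ?thesis .
  qed
  have e2: "(\<Prod>j\<in>UNIV. cis (r $ j * sin (\<theta> j))) = cis (\<Sum>j\<in>UNIV. r $ j * sin (\<theta> j))"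
    by (simp add: prod_cis)
  have h2: "((\<lambda>k::int^'n. complex_of_real (alpha_k k r) * cis (int_inner k \<omega> * x + int_inner k \<phi>) * cis \<beta>)
           has_sum cis (\<Sum>j\<in>UNIV. r $ j * sin (\<theta> j)) * cis \<beta>) UNIV"
    using has_sum_cmult_left[OF h1[unfolded e1 e2], of "cis \<beta>"] .
  have h3: "((\<lambda>k::int^'n. Im (complex_of_real (alpha_k k r) * cis (int_inner k \<omega> * x + int_inner k \<phi>) * cis \<beta>))
           has_sum Im (cis (\<Sum>j\<in>UNIV. r $ j * sin (\<theta> j)) * cis \<beta>)) UNIV"
    using has_sum_Im[OF h2] .
  have i1: "Im (complex_of_real a * cis T * cis \<beta>) = a * sin (T + \<beta>)" for a T
    by (simp add: mult.assoc cis_mult)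
  have i2: "Im (cis S * cis \<beta>) = sin (S + \<beta>)" for S
    by (simp add: cis_mult)
  show ?thesis using h3[unfolded i1 i2 \<theta>_def add.assoc] .
qed



lemma gen_trig: "(c::real) * (al * sin Y) * cos X + c * (al * cos Y) * sin X = c * (al * sin (X + Y))"
  by (simp add: sin_add algebra_simps)

theorem theorem4:
  fixes \<omega> \<phi> b c :: "real ^ 'n" and a :: "real ^ 'n ^ 'n" and d x :: real
  shows "((\<lambda>k :: int ^ 'n.
            (c \<bullet> A_vec \<phi> a b k) * cos (int_inner k \<omega> * x)
          + (c \<bullet> B_vec \<phi> a b k) * sin (int_inner k \<omega> * x))
         has_sum (sin_net \<omega> \<phi> a b c d x - d)) UNIV"
proof -
  have tot: "((\<lambda>k::int^'n. \<Sum>i\<in>UNIV. c $ i * (alpha_k k (a $ i) * sin (int_inner k \<omega> * x + (int_inner k \<phi> + b $ i))))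
     has_sum (\<Sum>i\<in>UNIV. c $ i * sin ((\<Sum>j\<in>UNIV. a $ i $ j * sin (\<omega> $ j * x + \<phi> $ j)) + b $ i))) UNIV"
    by (intro has_sum_finsum has_sum_cmult_right row_expansion) simp
  have r: "sin_net \<omega> \<phi> a b c d x - d = (\<Sum>i\<in>UNIV. c $ i * sin ((\<Sum>j\<in>UNIV. a $ i $ j * sin (\<omega> $ j * x + \<phi> $ j)) + b $ i))"
    unfolding sin_net_def by simp
  have t: "(c \<bullet> A_vec \<phi> a b k) * cos (int_inner k \<omega> * x) + (c \<bullet> B_vec \<phi> a b k) * sin (int_inner k \<omega> * x)
      = (\<Sum>i\<in>UNIV. c $ i * (alpha_k k (a $ i) * sin (int_inner k \<omega> * x + (int_inner k \<phi> + b $ i))))"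
    for k :: "int^'n"
  proof -
    have "(c \<bullet> A_vec \<phi> a b k) * cos (int_inner k \<omega> * x) + (c \<bullet> B_vec \<phi> a b k) * sin (int_inner k \<omega> * x)
        = (\<Sum>i\<in>UNIV. c $ i * A_k \<phi> k (a $ i) (b $ i) * cos (int_inner k \<omega> * x)
                    + c $ i * B_k \<phi> k (a $ i) (b $ i) * sin (int_inner k \<omega> * x))"
      unfolding inner_vec_def A_vec_def B_vec_def by (simp add: sum_distrib_right sum.distrib)
    also have "\<dots> = (\<Sum>i\<in>UNIV. c $ i * (alpha_k k (a $ i) * sin (int_inner k \<omega> * x + (int_inner k \<phi> + b $ i))))"
      by (rule sum.cong[OF refl]) (simp only: A_k_def B_k_def gen_trig)
    finally show ?thesis .
  qed
  show ?thesis unfolding t r by (rule tot)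
qed

end
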